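(* Let $d\ge2$ be even, $\epsilon>0$ and $B>0$. Then the mechanism $\mathcal{M}_{\alpha_0,B}$ with $\alpha_0=\frac{e^\epsilon}{e^\epsilon+1}$ does not satisfy $\epsilon$-local differential privacy on the input domain $[-1,1]^d$.
   Context: For $B>0$ and $v\in\{-1,1\}^d$ let $T^+(v)=\{y\in\{-B,B\}^d: y\cdot v>0\}$, $T^-(v)=\{y\in\{-B,B\}^d: y\cdot v\le 0\}$. For $\alpha\in[0,1]$, $\mathcal{M}_{\alpha,B}$ takes $x\in[-1,1]^d$, samples $V\in\{-1,1\}^d$ with independent coordinates $\mathbb{P}[V_j=\pm1]=\frac12\pm\frac12x_j$, independently samples $u\in\{0,1\}$ with $\mathbb{P}[u=1]=\alpha$, and outputs a uniformly random element of $T^+(V)$ if $u=1$ and of $T^-(V)$ if $u=0$. A mechanism $\mathcal{M}$ satisfies $\epsilon$-local differential privacy if for all inputs $x,x'$ and all sets $\mathcal{Y}$ of outputs, $\mathbb{P}[\mathcal{M}(x)\in\mathcal{Y}]\le e^\epsilon\mathbb{P}[\mathcal{M}(x')\in\mathcal{Y}]$. *)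

theory Defs
  imports "HOL-Analysis.Analysis"
begin

text \<open>Vectors in R^d are represented as real lists of length d.\<close>

definition sign_cube :: "nat \<Rightarrow> real list set" where
  "sign_cube d = {v. length v = d \<and> set v \<subseteq> {-1, 1}}"

definition out_cube :: "nat \<Rightarrow> real \<Rightarrow> real list set" where
  "out_cube d B = {y. length y = d \<and> set y \<subseteq> {-B, B}}"

definition in_domain :: "nat \<Rightarrow> real list set" where
  "in_domain d = {x. length x = d \<and> set x \<subseteq> {-1..1}}"

definition dotl :: "real list \<Rightarrow> real list \<Rightarrow> real" where
  "dotl y v = sum_list (map2 (*) y v)"

definition T_plus :: "real \<Rightarrow> real list \<Rightarrow> real list set" where
  "T_plus B v = {y \<in> out_cube (length v) B. dotl y v > 0}"

definition T_minus :: "real \<Rightarrow> real list \<Rightarrow> real list set" where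
  "T_minus B v = {y \<in> out_cube (length v) B. dotl y v \<le> 0}"

text \<open>Probability that V = v, where V_j are independent with P[V_j = \<plusminus>1] = 1/2 \<plusminus> x_j/2.\<close>
definition probV :: "real list \<Rightarrow> real list \<Rightarrow> real" where
  "probV x v = (\<Prod>j<length x. (1 + x ! j * v ! j) / 2)"

definition mech_prob :: "real \<Rightarrow> real \<Rightarrow> real list \<Rightarrow> real list \<Rightarrow> real" where
  "mech_prob \<alpha> B x y =
     (\<Sum>v\<in>sign_cube (length x). probV x v *
        (\<alpha> * (if y \<in> T_plus B v then 1 / real (card (T_plus B v)) else 0)
         + (1 - \<alpha>) * (if y \<in> T_minus B v then 1 / real (card (T_minus B v)) else 0)))"

text \<open>Probability that M_{alpha,B}(x) lands in an arbitrary set of outputs Y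
  (outputs outside the finite output cube have probability zero).\<close>
definition mech_set_prob :: "real \<Rightarrow> real \<Rightarrow> real list \<Rightarrow> real list set \<Rightarrow> real" where
  "mech_set_prob \<alpha> B x Y = (\<Sum>y\<in>Y \<inter> out_cube (length x) B. mech_prob \<alpha> B x y)"

definition eps_LDP :: "nat \<Rightarrow> real \<Rightarrow> real \<Rightarrow> real \<Rightarrow> bool" where
  "eps_LDP d \<epsilon> \<alpha> B \<longleftrightarrow>
     (\<forall>x\<in>in_domain d. \<forall>x'\<in>in_domain d. \<forall>Y.
        mech_set_prob \<alpha> B x Y \<le> exp \<epsilon> * mech_set_prob \<alpha> B x' Y)"

end

theory Submission
  imports Defs
begin

lemma finite_sign_cube: "finite (sign_cube d)"
proof -
  have "sign_cube d = {xs. set xs \<subseteq> {-1,1} \<and> length xs = d}" unfolding sign_cube_def by auto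
  thus ?thesis using finite_lists_length_eq[of "{-1,1::real}" d] by simp
qed

lemma finite_out_cube: "finite (out_cube d B)"
proof -
  have "out_cube d B = {xs. set xs \<subseteq> {-B,B} \<and> length xs = d}" unfolding out_cube_def by auto
  thus ?thesis using finite_lists_length_eq[of "{-B,B::real}" d] by simp
qed

lemma probV_vertex:
  assumes "x \<in> sign_cube d" "v \<in> sign_cube d"
  shows "probV x v = (if v = x then 1 else 0)"
proof (cases "v = x")
  case True
  have "\<And>j. j < length x \<Longrightarrow> (1 + x ! j * x ! j) / 2 = (1::real)"
  proof -
    fix j assume "j < length x"
    hence "x ! j \<in> set x" by simp
    hence "x ! j \<in> {-1,1}" using assms(1) unfolding sign_cube_def by auto
    thus "(1 + x ! j * x ! j) / 2 = (1::real)" by auto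
  qed
  thus ?thesis using True unfolding probV_def by simp
next
  case False
  have len: "length v = length x" using assms unfolding sign_cube_def by auto
  have "\<exists>j<length x. v ! j \<noteq> x ! j" using False len by (auto simp: list_eq_iff_nth_eq)
  then obtain j where j: "j < length x" "v ! j \<noteq> x ! j" by blast
  have "x ! j \<in> set x" "v ! j \<in> set v" using j(1) len by simp_all
  hence "x ! j \<in> {-1,1}" "v ! j \<in> {-1,1}" using assms unfolding sign_cube_def by auto
  hence "(1 + x ! j * v ! j) / 2 = (0::real)" using j(2) by auto
  hence "probV x v = 0" unfolding probV_def
    by (intro prod_zero) (use j(1) in auto)
  thus ?thesis using False by simp
qed

lemma mech_prob_vertex:
  assumes "x \<in> sign_cube d"
  shows "mech_prob \<alpha> B x y =
     \<alpha> * (if y \<in> T_plus B x then 1 / real (card (T_plus B x)) else 0)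
         + (1 - \<alpha>) * (if y \<in> T_minus B x then 1 / real (card (T_minus B x)) else 0)"
proof -
  have ld: "length x = d" using assms unfolding sign_cube_def by auto
  have "mech_prob \<alpha> B x y = (\<Sum>v\<in>sign_cube d. if v = x then
        (\<alpha> * (if y \<in> T_plus B v then 1 / real (card (T_plus B v)) else 0)
         + (1 - \<alpha>) * (if y \<in> T_minus B v then 1 / real (card (T_minus B v)) else 0)) else 0)"
    unfolding mech_prob_def ld
    by (rule sum.cong) (auto simp: probV_vertex[OF assms])
  also have "\<dots> = \<alpha> * (if y \<in> T_plus B x then 1 / real (card (T_plus B x)) else 0)
         + (1 - \<alpha>) * (if y \<in> T_minus B x then 1 / real (card (T_minus B x)) else 0)" by (subst sum.delta[OF finite_sign_cube]) (simp add: assms)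
  finally show ?thesis .
qed

lemma dotl_ones: "length y = n \<Longrightarrow> dotl y (replicate n c) = c * sum_list y"
  unfolding dotl_def
  by (induction y arbitrary: n) (auto simp: algebra_simps)

theorem mainTheorem15:
  fixes d :: nat and \<epsilon> B :: real
  assumes "d \<ge> 2" and "even d" and "\<epsilon> > 0" and "B > 0"
  shows "\<not> eps_LDP d \<epsilon> (exp \<epsilon> / (exp \<epsilon> + 1)) B"
proof
  assume ldp: "eps_LDP d \<epsilon> (exp \<epsilon> / (exp \<epsilon> + 1)) B"
  define \<alpha> where "\<alpha> = exp \<epsilon> / (exp \<epsilon> + 1)"
  define x0 :: "real list" where "x0 = replicate d 1"
  define x1 :: "real list" where "x1 = replicate d (-1)"
  define y :: "real list" where "y = replicate d B"
  have x0s: "x0 \<in> sign_cube d" and x1s: "x1 \<in> sign_cube d"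
    unfolding x0_def x1_def sign_cube_def by auto
  have x0d: "x0 \<in> in_domain d" and x1d: "x1 \<in> in_domain d"
    unfolding x0_def x1_def in_domain_def by auto
  have yo: "y \<in> out_cube d B" unfolding y_def out_cube_def by auto
  have dpos: "real d * B > 0" using assms by simp
  have Tp0: "T_plus B x0 = {z \<in> out_cube d B. sum_list z > 0}"
    unfolding T_plus_def x0_def out_cube_def using dotl_ones[where c=1] by auto
  have Tm1: "T_minus B x1 = {z \<in> out_cube d B. sum_list z \<ge> 0}"
    unfolding T_minus_def x1_def out_cube_def using dotl_ones[where c="-1"] by auto
  have Tm0: "T_minus B x0 = {z \<in> out_cube d B. sum_list z \<le> 0}"
    unfolding T_minus_def x0_def out_cube_def using dotl_ones[where c=1] by auto
  have Tp1: "T_plus B x1 = {z \<in> out_cube d B. sum_list z < 0}"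
    unfolding T_plus_def x1_def out_cube_def using dotl_ones[where c="-1"] by auto
  have sy: "sum_list y = real d * B" unfolding y_def by (simp add: sum_list_replicate)
  have yTp0: "y \<in> T_plus B x0" using Tp0 yo sy dpos by simp
  have yTm0: "y \<notin> T_minus B x0" using Tm0 sy dpos by simp
  have yTp1: "y \<notin> T_plus B x1" using Tp1 sy dpos by simp
  have yTm1: "y \<in> T_minus B x1" using Tm1 yo sy dpos by simp
  define z :: "real list" where "z = replicate (d div 2) B @ replicate (d div 2) (-B)"
  have zo: "z \<in> out_cube d B" unfolding z_def out_cube_def using assms(2) by auto
  have sz: "sum_list z = 0" unfolding z_def by (simp add: sum_list_replicate)
  have sub: "T_plus B x0 \<subset> T_minus B x1"
  proof -
    have "z \<in> T_minus B x1" "z \<notin> T_plus B x0" using Tm1 Tp0 zo sz by auto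
    moreover have "T_plus B x0 \<subseteq> T_minus B x1" using Tp0 Tm1 by auto
    ultimately show ?thesis by blast
  qed
  have fin: "finite (T_minus B x1)" using Tm1 finite_out_cube by simp
  have Nlt: "card (T_plus B x0) < card (T_minus B x1)" using psubset_card_mono[OF fin sub] .
  have Npos: "card (T_plus B x0) > 0"
  proof -
    have "finite (T_plus B x0)" using finite_subset[OF _ fin] sub by blast
    thus ?thesis using yTp0 by (auto simp: card_gt_0_iff)
  qed
  have lx0: "length x0 = d" and lx1: "length x1 = d" unfolding x0_def x1_def by auto
  have P0: "mech_set_prob \<alpha> B x0 {y} = \<alpha> / real (card (T_plus B x0))"
    unfolding mech_set_prob_def lx0 using yo yTp0 yTm0 mech_prob_vertex[OF x0s] by simp
  have P1: "mech_set_prob \<alpha> B x1 {y} = (1 - \<alpha>) / real (card (T_minus B x1))"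
    unfolding mech_set_prob_def lx1 using yo yTp1 yTm1 mech_prob_vertex[OF x1s] by simp
  have "mech_set_prob \<alpha> B x0 {y} \<le> exp \<epsilon> * mech_set_prob \<alpha> B x1 {y}"
    using ldp[unfolded eps_LDP_def, folded \<alpha>_def, rule_format, OF x0d x1d, of "{y}"] .
  hence ineq: "\<alpha> / real (card (T_plus B x0)) \<le> exp \<epsilon> * ((1 - \<alpha>) / real (card (T_minus B x1)))"
    using P0 P1 by simp
  have e: "exp \<epsilon> > 0" by simp
  have a1: "1 - \<alpha> = 1 / (exp \<epsilon> + 1)" 
  proof -
    have e1: "exp \<epsilon> + 1 \<noteq> 0" using e by linarith
    show ?thesis unfolding \<alpha>_def using e1 by (simp add: divide_simps)
  qed
  define p where "p = real (card (T_plus B x0))"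
  define m where "m = real (card (T_minus B x1))"
  have pm: "0 < p" "p < m" using Npos Nlt unfolding p_def m_def by auto
  have "\<alpha> / p \<le> exp \<epsilon> * ((1 - \<alpha>) / m)"
    using ineq unfolding p_def m_def .
  also have "exp \<epsilon> * ((1 - \<alpha>) / m) = exp \<epsilon> * (1 / (exp \<epsilon> + 1)) / m" using a1 by simp
  also have "\<dots> = \<alpha> / m" unfolding \<alpha>_def by simp
  finally have "\<alpha> / p \<le> \<alpha> / m" .
  hence "exp \<epsilon> / (exp \<epsilon> + 1) / p \<le> exp \<epsilon> / (exp \<epsilon> + 1) / m" unfolding \<alpha>_def .
  moreover have "exp \<epsilon> / (exp \<epsilon> + 1) / m < exp \<epsilon> / (exp \<epsilon> + 1) / p"
  proof -
    have "exp \<epsilon> + 1 > 0" using e by linarith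
    hence "exp \<epsilon> / (exp \<epsilon> + 1) > 0" using e by (rule divide_pos_pos[rotated])
    thus ?thesis using pm by (intro divide_strict_left_mono) auto
  qed
  ultimately show False by simp
qed

end
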